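(* If $G$ is a finite simple graph of order $n$ with at least one edge such that $G[\mathrm{core}(G)]$ is Class 1, then $\mathrm{es}_{\Delta}(G)\leq \frac{n}{2}$. In particular, if $G$ is a Class 1 graph, then $\mathrm{es}_{\Delta}(G)\leq\frac{n}{2}$.
   Context: $\mathrm{core}(G)$ is the set of vertices of $G$ of maximum degree $\Delta(G)$. A graph $H$ is Class 1 if its chromatic index equals its maximum degree; in the first statement this is interpreted as $G[\mathrm{core}(G)]$ having a proper $\Delta(G)$-edge coloring. $\mathrm{es}_{\Delta}(G)$ is the minimum number of edges of $G$ whose removal results in a subgraph with maximum degree $\Delta(G)-1$. *)

theory Defs
  imports Main
begin

definition simple_graph :: "'a set \<Rightarrow> 'a set set \<Rightarrow> bool" where
  "simple_graph V E \<longleftrightarrow> finite V \<and> (\<forall>e\<in>E. e \<subseteq> V \<and> card e = 2)"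

definition degree :: "'a set set \<Rightarrow> 'a \<Rightarrow> nat" where
  "degree E v = card {e\<in>E. v \<in> e}"

definition max_degree :: "'a set \<Rightarrow> 'a set set \<Rightarrow> nat" where
  "max_degree V E = Max (degree E ` V)"

definition core :: "'a set \<Rightarrow> 'a set set \<Rightarrow> 'a set" where
  "core V E = {v\<in>V. degree E v = max_degree V E}"

definition induced_edges :: "'a set set \<Rightarrow> 'a set \<Rightarrow> 'a set set" where
  "induced_edges E S = {e\<in>E. e \<subseteq> S}"

definition proper_edge_colouring :: "'a set set \<Rightarrow> nat \<Rightarrow> ('a set \<Rightarrow> nat) \<Rightarrow> bool" where
  "proper_edge_colouring F k c \<longleftrightarrow>
     (\<forall>e\<in>F. c e < k) \<and>
     (\<forall>e\<in>F. \<forall>e'\<in>F. e \<noteq> e' \<and> e \<inter> e' \<noteq> {} \<longrightarrow> c e \<noteq> c e')"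

definition edge_colourable :: "'a set set \<Rightarrow> nat \<Rightarrow> bool" where
  "edge_colourable F k \<longleftrightarrow> (\<exists>c. proper_edge_colouring F k c)"

definition chromatic_index :: "'a set set \<Rightarrow> nat" where
  "chromatic_index F = (LEAST k. edge_colourable F k)"

definition class1 :: "'a set \<Rightarrow> 'a set set \<Rightarrow> bool" where
  "class1 V E \<longleftrightarrow> chromatic_index E = max_degree V E"

definition es_delta :: "'a set \<Rightarrow> 'a set set \<Rightarrow> nat" where
  "es_delta V E = Min {card F | F. F \<subseteq> E \<and> max_degree V (E - F) = max_degree V E - 1}"

end

theory Submission
  imports Defs
begin

lemma pec_mono: "proper_edge_colouring F k c \<Longrightarrow> F' \<subseteq> F \<Longrightarrow> proper_edge_colouring F' k c"
  unfolding proper_edge_colouring_def by blast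

lemma main:
  assumes G: "simple_graph V E" and ne: "E \<noteq> {}"
  and pc: "proper_edge_colouring (induced_edges E (core V E)) (max_degree V E) c"
  shows "2 * es_delta V E \<le> card V"
proof -
  define D where "D = max_degree V E"
  define K where "K = core V E"
  define H where "H = induced_edges E K"
  define N where "N = V - K"
  have finV: "finite V" and eV: "\<And>e. e\<in>E \<Longrightarrow> e \<subseteq> V" and e2: "\<And>e. e\<in>E \<Longrightarrow> card e = 2"
    using G by (auto simp: simple_graph_def)
  have finE: "finite E" using finV eV
    by (meson Pow_iff finite_Pow_iff rev_finite_subset subsetI)
  have finEv: "\<And>v P. finite {e\<in>E. P e}" using finE by auto
  obtain e0 where e0: "e0 \<in> E" using ne by auto
  then obtain a b where ab: "e0 = {a,b}" "a \<noteq> b" using e2[OF e0] by (meson card_2_iff)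
  have aV: "a \<in> V" using eV[OF e0] ab by auto
  have Vne: "V \<noteq> {}" using aV by auto
  have degle: "\<And>v. v\<in>V \<Longrightarrow> degree E v \<le> D" unfolding D_def max_degree_def using finV by auto
  have "D \<in> degree E ` V" unfolding D_def max_degree_def using finV Vne by auto
  then obtain v0 where v0: "v0\<in>V" "degree E v0 = D" by auto
  have Kdef: "\<And>v. v\<in>K \<longleftrightarrow> v\<in>V \<and> degree E v = D" by (simp add: K_def core_def D_def)
  have "degree E a \<ge> 1"
  proof -
    have "e0 \<in> {e\<in>E. a\<in>e}" using e0 ab by auto
    hence "{e\<in>E. a\<in>e} \<noteq> {}" by auto
    thus ?thesis unfolding degree_def using finEv[of "\<lambda>e. a\<in>e"]
      by (simp add: Suc_le_eq card_gt_0_iff)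
  qed
  hence D1: "D \<ge> 1" using degle[OF aV] by simp
  have KV: "K \<subseteq> V" using Kdef by auto
  have finK: "finite K" using KV finV finite_subset by auto
  have v0K: "v0 \<in> K" using v0 Kdef by auto
  have Hd: "\<And>e. e\<in>H \<longleftrightarrow> e\<in>E \<and> e\<subseteq>K" by (simp add: H_def induced_edges_def)
  have cD: "\<And>e. e\<in>H \<Longrightarrow> c e < D"
    using pc unfolding proper_edge_colouring_def H_def K_def D_def by blast
  have cp: "\<And>e e'. e\<in>H \<Longrightarrow> e'\<in>H \<Longrightarrow> e\<noteq>e' \<Longrightarrow> e\<inter>e'\<noteq>{} \<Longrightarrow> c e \<noteq> c e'"
    using pc unfolding proper_edge_colouring_def H_def K_def D_def by blast
  define U where "U j = {v\<in>K. \<forall>e\<in>H. v\<in>e \<longrightarrow> c e \<noteq> j}" for j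
  define M where "M j = {e\<in>H. c e = j}" for j
  define Out where "Out v = {e\<in>E. v\<in>e \<and> \<not> e\<subseteq>K}" for v
  have other: "\<exists>w. e = {v,w} \<and> w\<notin>K \<and> w\<in>V \<and> w\<noteq>v"
    if as: "e\<in>E" "v\<in>e" "v\<in>K" "\<not> e\<subseteq>K" for e v
  proof -
    obtain x y where "e = {x,y}" "x \<noteq> y" using e2[OF as(1)] by (meson card_2_iff)
    thus ?thesis using as eV[OF as(1)] by auto
  qed
  have count_v: "card {j\<in>{..<D}. v \<in> U j} \<le> card (Out v)" if v: "v\<in>K" for v
  proof -
    let ?Hv = "{e\<in>H. v\<in>e}"
    have finHv: "finite ?Hv" using finEv[of "\<lambda>e. e \<subseteq> K \<and> v \<in> e"] by (simp add: Hd)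
    have finO: "finite (Out v)" unfolding Out_def using finEv by simp
    have eq: "{e\<in>E. v\<in>e} = ?Hv \<union> Out v" and dj: "?Hv \<inter> Out v = {}"
      by (auto simp: Hd Out_def)
    have "card ?Hv + card (Out v) = D"
      using v Kdef[of v] card_Un_disjoint[OF finHv finO dj] eq unfolding degree_def by simp
    moreover have "{j\<in>{..<D}. v\<in>U j} = {..<D} - c ` ?Hv" by (auto simp: U_def v)
    moreover have "card (c ` ?Hv) = card ?Hv"
    proof (rule card_image, rule inj_onI)
      fix x y assume x: "x\<in>?Hv" and y: "y\<in>?Hv" and cxy: "c x = c y"
      show "x = y"
      proof (rule ccontr)
        assume "x \<noteq> y"
        moreover have "x \<inter> y \<noteq> {}" using x y by auto
        ultimately show False using cp[of x y] x y cxy by simp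
      qed
    qed
    moreover have "c ` ?Hv \<subseteq> {..<D}" using cD by auto
    ultimately show ?thesis
      by (simp add: card_Diff_subset finHv)
  qed
  have sumU: "(\<Sum>j<D. card (U j)) \<le> card N * (D - 1)"
  proof -
    have "(\<Sum>j<D. card (U j)) = (\<Sum>j<D. \<Sum>v\<in>K. (if v\<in>U j then 1 else 0::nat))"
    proof (rule sum.cong[OF refl])
      fix j
      have "U j = {v\<in>K. v \<in> U j}" by (auto simp: U_def)
      hence "card (U j) = (\<Sum>v\<in>{v\<in>K. v \<in> U j}. 1)" by simp
      also have "\<dots> = (\<Sum>v\<in>K. (if v\<in>U j then 1 else 0))"
        using sum.inter_filter[OF finK, of "\<lambda>_. 1::nat" "\<lambda>v. v \<in> U j"] by simp
      finally show "card (U j) = (\<Sum>v\<in>K. (if v\<in>U j then 1 else 0))" .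
    qed
    also have "\<dots> = (\<Sum>v\<in>K. \<Sum>j<D. (if v\<in>U j then 1 else 0::nat))" by (rule sum.swap)
    also have "\<dots> = (\<Sum>v\<in>K. card {j\<in>{..<D}. v \<in> U j})"
      using sum.inter_filter[of "{..<D}" "\<lambda>_. 1::nat"] by simp
    also have "\<dots> \<le> (\<Sum>v\<in>K. card (Out v))" by (rule sum_mono) (rule count_v)
    also have "\<dots> = card (SIGMA v:K. Out v)"
      using card_SigmaI[OF finK, of Out] finEv by (simp add: Out_def)
    also have "\<dots> \<le> card (SIGMA w:N. {e\<in>E. w\<in>e})"
    proof (rule card_inj_on_le[where f = "\<lambda>(v,e). (SOME w. w\<in>e \<and> w\<notin>K, e)"])
      have fin: "finite N" using finV by (simp add: N_def)
      show "finite (SIGMA w:N. {e\<in>E. w\<in>e})" using fin finE by (auto intro: finite_SigmaI)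
      have key: "\<And>v e. v\<in>K \<Longrightarrow> e \<in> Out v \<Longrightarrow> \<exists>w. e = {v,w} \<and> w\<notin>K \<and> w\<in>V \<and> (SOME w. w\<in>e \<and> w\<notin>K) = w"
      proof -
        fix v e assume "v\<in>K" "e \<in> Out v"
        then obtain w where w: "e = {v,w}" "w\<notin>K" "w\<in>V" using other unfolding Out_def by blast
        have "(SOME w. w\<in>e \<and> w\<notin>K) = w"
          by (rule some_equality) (use w \<open>v\<in>K\<close> in auto)
        thus "\<exists>w. e = {v,w} \<and> w\<notin>K \<and> w\<in>V \<and> (SOME w. w\<in>e \<and> w\<notin>K) = w" using w by blast
      qed
      show "(\<lambda>(v,e). (SOME w. w\<in>e \<and> w\<notin>K, e)) ` (SIGMA v:K. Out v) \<subseteq> (SIGMA w:N. {e\<in>E. w\<in>e})"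
      proof
        fix p assume "p \<in> (\<lambda>(v,e). (SOME w. w\<in>e \<and> w\<notin>K, e)) ` (SIGMA v:K. Out v)"
        then obtain v e where "v\<in>K" "e\<in>Out v" "p = (SOME w. w\<in>e \<and> w\<notin>K, e)" by auto
        thus "p \<in> (SIGMA w:N. {e\<in>E. w\<in>e})" using key[of v e] by (auto simp: N_def Out_def)
      qed
      show "inj_on (\<lambda>(v,e). (SOME w. w\<in>e \<and> w\<notin>K, e)) (SIGMA v:K. Out v)"
      proof (rule inj_onI, clarsimp)
        fix v e v' assume a: "v\<in>K" "e\<in>Out v" "v'\<in>K" "e\<in>Out v'"
        from key[OF a(1,2)] key[OF a(3,4)] a(1,3) show "v = v'" by (auto simp: doubleton_eq_iff)
      qed
    qed
    also have "\<dots> = (\<Sum>w\<in>N. degree E w)"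
      using card_SigmaI[of N "\<lambda>w. {e\<in>E. w\<in>e}"] finV finEv by (simp add: N_def degree_def)
    also have "\<dots> \<le> (\<Sum>w\<in>N. D - 1)"
    proof (rule sum_mono)
      fix w assume "w\<in>N"
      hence "w\<in>V" "degree E w \<noteq> D" using Kdef by (auto simp: N_def)
      thus "degree E w \<le> D - 1" using degle[of w] by simp
    qed
    also have "\<dots> = card N * (D - 1)" by simp
    finally show ?thesis .
  qed
  have "\<exists>j<D. card (U j) \<le> card N"
  proof (rule ccontr)
    assume "\<not> (\<exists>j<D. card (U j) \<le> card N)"
    hence "\<forall>j<D. card N + 1 \<le> card (U j)" by (simp add: not_le Suc_le_eq)
    hence "(\<Sum>j<D. card N + 1) \<le> (\<Sum>j<D. card (U j))" by (intro sum_mono) auto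
    hence "D * (card N + 1) \<le> card N * (D - 1)" using sumU by simp
    moreover have "card N * (D - 1) \<le> card N * D" by simp
    ultimately show False using D1 by (simp add: algebra_simps)
  qed
  then obtain i where i: "i<D" "card (U i) \<le> card N" by blast
  have Outne: "Out u \<noteq> {}" if "u \<in> U i" for u
  proof -
    have uK: "u\<in>K" using that by (simp add: U_def)
    have "i \<in> {j\<in>{..<D}. u \<in> U j}" using i that by auto
    hence "card {j\<in>{..<D}. u \<in> U j} \<ge> 1"
      by (simp add: Suc_le_eq card_gt_0_iff) blast
    hence "card (Out u) \<ge> 1" using count_v[OF uK] by simp
    thus ?thesis by auto
  qed
  define g where "g u = (SOME e. e\<in>Out u)" for u
  have g: "\<And>u. u\<in>U i \<Longrightarrow> g u \<in> Out u" unfolding g_def using Outne by (meson ex_in_conv someI)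
  have gK: "v = u" if as: "u\<in>U i" "v\<in>K" "v\<in>g u" for u v
  proof -
    have uK: "u\<in>K" using as by (simp add: U_def)
    obtain w where "g u = {u,w}" "w\<notin>K" using other[of "g u" u] g[OF as(1)] uK unfolding Out_def by blast
    thus ?thesis using as uK by auto
  qed
  define F where "F = M i \<union> g ` U i"
  have FE: "F \<subseteq> E" using g by (auto simp: F_def M_def Hd Out_def)
  have finF: "finite F" using FE finE finite_subset by auto
  have finM: "finite (M i)" using FE finF by (metis F_def finite_Un)
  have finUi: "finite (U i)" using finK by (simp add: U_def)
  have cardF: "2 * card F \<le> card V"
  proof -
    have "card F \<le> card (M i) + card (g ` U i)" unfolding F_def by (rule card_Un_le)
    also have "\<dots> \<le> card (M i) + card (U i)" using card_image_le[OF finUi] by simp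
    finally have 1: "card F \<le> card (M i) + card (U i)" .
    have "card (\<Union>(M i)) = sum card (M i)"
    proof (rule card_Union_disjoint)
      show "pairwise disjnt (M i)"
        unfolding pairwise_def disjnt_def M_def using cp by blast
      show "\<And>A. A \<in> M i \<Longrightarrow> finite A" using finK by (auto simp: M_def Hd intro: finite_subset)
    qed
    also have "\<dots> = 2 * card (M i)" using e2 by (simp add: M_def Hd)
    finally have 2: "card (\<Union>(M i)) = 2 * card (M i)" .
    have dj: "\<Union>(M i) \<inter> U i = {}" by (auto simp: M_def U_def)
    have sub: "\<Union>(M i) \<union> U i \<subseteq> K" by (auto simp: M_def U_def Hd)
    have finUM: "finite (\<Union>(M i))" using sub finK finite_subset by blast
    have "card (\<Union>(M i)) + card (U i) \<le> card K"
      using card_Un_disjoint[OF finUM finUi dj] card_mono[OF finK sub] by simp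
    moreover have "card K + card N = card V"
      using card_Un_disjoint[of K N] finK finV KV by (metis N_def Un_Diff_cancel2 card_Diff_subset card_mono le_add_diff_inverse)
    ultimately show ?thesis using 1 2 i by simp
  qed
  have Fv: "card {e\<in>F. v\<in>e} = 1" if v: "v\<in>K" for v
  proof -
    have fin: "finite {e\<in>F. v\<in>e}" using finF by simp
    have "{e\<in>F. v\<in>e} \<noteq> {}"
    proof (cases "v \<in> U i")
      case True
      hence "g v \<in> F" "v \<in> g v" using g[OF True] by (auto simp: F_def Out_def)
      thus ?thesis by auto
    next
      case False
      then obtain e where "e\<in>H" "v\<in>e" "c e = i" using v by (auto simp: U_def)
      hence "e \<in> {e\<in>F. v\<in>e}" by (auto simp: F_def M_def)
      thus ?thesis by auto
    qed
    moreover have "\<forall>x\<in>{e\<in>F. v\<in>e}. \<forall>y\<in>{e\<in>F. v\<in>e}. x = y"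
    proof (intro ballI)
      fix x y assume x: "x \<in> {e\<in>F. v\<in>e}" and y: "y \<in> {e\<in>F. v\<in>e}"
      have gu: "z \<in> g ` U i \<Longrightarrow> v \<in> z \<Longrightarrow> z = g v \<and> v \<in> U i" for z
        using gK v by blast
      have mu: "z \<in> M i \<Longrightarrow> v \<in> z \<Longrightarrow> v \<notin> U i" for z
        by (auto simp: M_def U_def)
      show "x = y"
      proof (cases "x \<in> M i")
        case True
        show ?thesis
        proof (cases "y \<in> M i")
          case True
          with \<open>x \<in> M i\<close> x y cp show ?thesis by (auto simp: M_def)
        next
          case False
          hence "y \<in> g ` U i" using y by (auto simp: F_def)
          with gu mu y x True show ?thesis by blast
        qed
      next
        case False
        hence xg: "x \<in> g ` U i" using x by (auto simp: F_def)
        show ?thesis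
        proof (cases "y \<in> M i")
          case True
          with gu mu y x xg show ?thesis by blast
        next
          case False
          hence "y \<in> g ` U i" using y by (auto simp: F_def)
          with gu xg x y show ?thesis by blast
        qed
      qed
    qed
    ultimately have "0 < card {e\<in>F. v\<in>e}" "card {e\<in>F. v\<in>e} \<le> Suc 0"
      using fin card_gt_0_iff card_le_Suc0_iff_eq[OF fin] by blast+
    thus ?thesis by simp
  qed
  have degK: "degree (E-F) v = D - 1" if v: "v\<in>K" for v
  proof -
    have "{e\<in>E-F. v\<in>e} = {e\<in>E. v\<in>e} - {e\<in>F. v\<in>e}" using FE by auto
    moreover have "card ({e\<in>E. v\<in>e} - {e\<in>F. v\<in>e}) = card {e\<in>E. v\<in>e} - card {e\<in>F. v\<in>e}"
      by (rule card_Diff_subset) (use finF FE in auto)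
    ultimately show ?thesis using Fv[OF v] v Kdef unfolding degree_def by simp
  qed
  have degN: "degree (E-F) v \<le> D - 1" if "v\<in>V" "v\<notin>K" for v
  proof -
    have "degree (E-F) v \<le> degree E v" unfolding degree_def
      by (rule card_mono) (use finEv in auto)
    moreover have "degree E v < D" using degle[OF that(1)] Kdef that by force
    ultimately show ?thesis by simp
  qed
  have md: "max_degree V (E-F) = D - 1"
    unfolding max_degree_def
  proof (rule Max_eqI)
    show "finite (degree (E - F) ` V)" using finV by simp
    show "\<And>y. y \<in> degree (E - F) ` V \<Longrightarrow> y \<le> D - 1" using degK degN by fastforce
    show "D - 1 \<in> degree (E - F) ` V" using degK[OF v0K] v0 by force
  qed
  let ?S = "{card F | F. F \<subseteq> E \<and> max_degree V (E - F) = max_degree V E - 1}"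
  have "card F \<in> ?S" using FE md D_def by auto
  moreover have "finite ?S"
  proof -
    have "?S \<subseteq> card ` Pow E" by auto
    thus ?thesis using finE finite_subset by blast
  qed
  ultimately have "es_delta V E \<le> card F" unfolding es_delta_def by simp
  thus ?thesis using cardF by simp
qed

theorem corollary5p3:
  fixes V :: "'a set" and E :: "'a set set"
  assumes "simple_graph V E" and "E \<noteq> {}"
  shows "(edge_colourable (induced_edges E (core V E)) (max_degree V E)
            \<longrightarrow> 2 * es_delta V E \<le> card V)
       \<and> (class1 V E \<longrightarrow> 2 * es_delta V E \<le> card V)"
proof (intro conjI impI)
  assume "edge_colourable (induced_edges E (core V E)) (max_degree V E)"
  then obtain c where "proper_edge_colouring (induced_edges E (core V E)) (max_degree V E) c"
    by (auto simp: edge_colourable_def)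
  thus "2 * es_delta V E \<le> card V" using main assms by blast
next
  assume c1: "class1 V E"
  have finE: "finite E" using assms(1) unfolding simple_graph_def
    by (meson Pow_iff finite_Pow_iff rev_finite_subset subsetI)
  obtain h where h: "bij_betw h E {0..<card E}" using ex_bij_betw_finite_nat[OF finE] by blast
  have "proper_edge_colouring E (card E) h"
    using h unfolding proper_edge_colouring_def bij_betw_def inj_on_def by auto
  hence "\<exists>k. edge_colourable E k" by (auto simp: edge_colourable_def)
  hence "edge_colourable E (chromatic_index E)" unfolding chromatic_index_def by (rule LeastI_ex)
  hence "edge_colourable E (max_degree V E)" using c1 by (simp add: class1_def)
  then obtain c where "proper_edge_colouring E (max_degree V E) c" by (auto simp: edge_colourable_def)
  hence "proper_edge_colouring (induced_edges E (core V E)) (max_degree V E) c"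
    by (rule pec_mono) (auto simp: induced_edges_def)
  thus "2 * es_delta V E \<le> card V" using main assms by blast
qed

end
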